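(* Let $Z\subset\mathbb{R}^5$ be the set of real solutions $(x_1,\dots,x_5)$ of the system $$1+x_1=x_3x_4,\quad 1+x_2=x_4x_5,\quad 1+x_3=x_5x_1,\quad 1+x_4=x_1x_2,\quad 1+x_5=x_2x_3.$$ Then $Z$ is a smooth surface in $\mathbb{R}^5$. Its closure $S\subset\mathbb{R}\mathbb{P}^5$ (where $\mathbb{R}^5$ is regarded as a standard affine chart of $\mathbb{R}\mathbb{P}^5$) is a smooth compact surface, and its complexification $S_{\mathbb{C}}\subset\mathbb{C}\mathbb{P}^5$ is a smooth compact complex surface.
   Context: The complexification $S_{\mathbb{C}}$ means the closure in $\mathbb{C}\mathbb{P}^5$ of the set of complex solutions $(x_1,\dots,x_5)\in\mathbb{C}^5$ of the same system, with $\mathbb{C}^5$ regarded as the standard affine chart of $\mathbb{C}\mathbb{P}^5$. *)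

theory Defs
  imports "HOL-Analysis.Analysis"
begin

definition sys :: "'a::comm_ring_1 \<Rightarrow> 'a \<Rightarrow> 'a \<Rightarrow> 'a \<Rightarrow> 'a \<Rightarrow> bool" where
  "sys x1 x2 x3 x4 x5 \<longleftrightarrow>
     1 + x1 = x3 * x4 \<and> 1 + x2 = x4 * x5 \<and> 1 + x3 = x5 * x1 \<and>
     1 + x4 = x1 * x2 \<and> 1 + x5 = x2 * x3"

text \<open>Coordinates of a point of K^5 are x$1,...,x$5 (indices in the numeral type 5;
  note that 5 = 0 there, the five indices are distinct).\<close>

definition solset :: "('a::comm_ring_1, 5) vec set" where
  "solset = {x. sys (x$1) (x$2) (x$3) (x$4) (x$5)}"

section \<open>Homogeneous coordinates: K^6 indexed by 5 option, None = extra coordinate\<close>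

definition hom :: "('a::comm_ring_1, 'n::finite) vec \<Rightarrow> ('a, 'n option) vec" where
  "hom x = (\<chi> j. case j of None \<Rightarrow> 1 | Some i \<Rightarrow> x $ i)"

text \<open>Affine chart {y. y$k \<noteq> 0} of projective space, identified with K^n
  (coordinates y$j/y$k for j \<noteq> k, in a fixed order).\<close>

definition chart :: "'n::finite option \<Rightarrow> ('a::field, 'n option) vec \<Rightarrow> ('a, 'n) vec" where
  "chart k y = (case k of
      None \<Rightarrow> (\<chi> i. y $ Some i / y $ None)
    | Some j \<Rightarrow> (\<chi> i. if i = j then y $ None / y $ Some j else y $ Some i / y $ Some j))"

text \<open>Preimage in K^(n+1) - {0} of the closure in projective space of an affine set A
  (the quotient map K^(n+1)-{0} \<rightarrow> KP^n is open, so this is closure of the cone minus 0).\<close>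

definition proj_closure_cone ::
  "('a::{field, real_normed_vector}, 'n::finite) vec set \<Rightarrow> ('a, 'n option) vec set" where
  "proj_closure_cone A = closure {c *s hom x | c x. c \<noteq> 0 \<and> x \<in> A} - {0}"

fun iter_dd :: "'a::real_normed_vector list \<Rightarrow> ('a \<Rightarrow> 'b::real_normed_vector) \<Rightarrow> 'a \<Rightarrow> 'b" where
  "iter_dd [] f = f"
| "iter_dd (v # vs) f = (\<lambda>x. frechet_derivative (iter_dd vs f) (at x) v)"

definition smooth_on :: "'a::real_normed_vector set \<Rightarrow> ('a \<Rightarrow> 'b::real_normed_vector) \<Rightarrow> bool" where
  "smooth_on U f \<longleftrightarrow> (\<forall>vs. \<forall>x\<in>U. iter_dd vs f differentiable (at x))"

text \<open>M is a smooth embedded submanifold of R^n of codimension CARD('m):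
  locally the zero set of a smooth submersion to R^'m.\<close>

definition real_submanifold :: "'m::finite itself \<Rightarrow> (real, 'n::finite) vec set \<Rightarrow> bool" where
  "real_submanifold _ M \<longleftrightarrow>
    (\<forall>p\<in>M. \<exists>U (F :: (real, 'n) vec \<Rightarrow> (real, 'm) vec).
       open U \<and> p \<in> U \<and> smooth_on U F \<and>
       (\<forall>x\<in>U. surj (frechet_derivative F (at x))) \<and>
       M \<inter> U = {x\<in>U. F x = 0})"

definition complex_submanifold :: "'m::finite itself \<Rightarrow> (complex, 'n::finite) vec set \<Rightarrow> bool" where
  "complex_submanifold _ M \<longleftrightarrow>
    (\<forall>p\<in>M. \<exists>U (F :: (complex, 'n) vec \<Rightarrow> (complex, 'm) vec).
       open U \<and> p \<in> U \<and>
       (\<forall>x\<in>U. \<exists>L. (F has_derivative L) (at x) \<and> (\<forall>c v. L (c *s v) = c *s L v) \<and> surj L) \<and>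
       M \<inter> U = {x\<in>U. F x = 0})"

end

theory Submission
  imports Defs
begin


lemma exhaust_5:
  fixes x :: 5
  shows "x = 0 \<or> x = 1 \<or> x = 2 \<or> x = 3 \<or> x = 4"
proof (induct x)
  case (of_int z)
  then have "z = 0 \<or> z = 1 \<or> z = 2 \<or> z = 3 \<or> z = 4" by fastforce
  then show ?case by auto
qed

lemma forall_5: "(\<forall>i::5. P i) \<longleftrightarrow> P 0 \<and> P 1 \<and> P 2 \<and> P 3 \<and> P 4"
  by (metis exhaust_5)

lemma exhaust_rel:
  fixes i a :: 5
  shows "i = a \<or> i = a + 1 \<or> i = a + 2 \<or> i = a + 3 \<or> i = a + 4"
proof -
  have "i - a = 0 \<or> i - a = 1 \<or> i - a = 2 \<or> i - a = 3 \<or> i - a = 4" by (rule exhaust_5)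
  then show ?thesis by (auto simp: algebra_simps)
qed

lemma forall_rel: "(\<forall>i::5. P i) \<longleftrightarrow> P a \<and> P (a+1) \<and> P (a+2) \<and> P (a+3) \<and> P (a+4)"
  using exhaust_rel[of _ a] by metis

lemma num5: "(5::5) = 0" "(6::5) = 1" "(7::5) = 2" by simp_all

lemma solset_iff: "x \<in> solset \<longleftrightarrow> (\<forall>i::5. 1 + x$i = x$(i+2) * x$(i+3))"
  unfolding solset_def sys_def forall_5 by (auto simp: algebra_simps num5)

lemma idx_simps:
  fixes a :: 5
  shows "a + 1 + 2 = a + 3" "a + 1 + 3 = a + 4" "a + 2 + 2 = a + 4" "a + 2 + 3 = a"
    "a + 3 + 2 = a" "a + 3 + 3 = a + 1" "a + 4 + 2 = a + 1" "a + 4 + 3 = a + 2"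
    "a + 0 = a"
  by simp_all

lemma idx_neq:
  fixes a :: 5
  shows "a + 1 \<noteq> a" "a + 2 \<noteq> a" "a + 3 \<noteq> a" "a + 4 \<noteq> a"
   "a + 1 \<noteq> a + 2" "a + 1 \<noteq> a + 3" "a + 1 \<noteq> a + 4" "a + 2 \<noteq> a + 3"
   "a + 2 \<noteq> a + 4" "a + 3 \<noteq> a + 4"
  by simp_all

lemma solset_iff_rel: "x \<in> solset \<longleftrightarrow>
   1 + x$a = x$(a+2) * x$(a+3) \<and> 1 + x$(a+1) = x$(a+3) * x$(a+4) \<and>
   1 + x$(a+2) = x$(a+4) * x$a \<and> 1 + x$(a+3) = x$a * x$(a+1) \<and>
   1 + x$(a+4) = x$(a+1) * x$(a+2)"
  unfolding solset_iff forall_rel[where a=a] by (simp add: idx_simps add.assoc[symmetric])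



lemma hom_None[simp]: "hom x $ None = 1" and hom_Some[simp]: "hom x $ Some i = x $ i"
  by (simp_all add: hom_def)

definition cone :: "('a::real_normed_field, 5 option) vec set" where
  "cone = {c *s hom x | c x. c \<noteq> 0 \<and> x \<in> (solset :: ('a,5) vec set)}"

definition Vh :: "('a::real_normed_field, 5 option) vec set" where
  "Vh = {y. \<forall>i. y$None * y$None + y$None * y$Some i = y$Some (i+2) * y$Some (i+3)}"

lemma pcc_eq: "proj_closure_cone (solset :: ('a::real_normed_field,5) vec set) = closure cone - {0}"
  unfolding proj_closure_cone_def cone_def by simp

lemma cone_sub_Vh: "cone \<subseteq> (Vh :: ('a::real_normed_field, 5 option) vec set)"
proof
  fix y :: "('a, 5 option) vec" assume "y \<in> cone"
  then obtain c x where y: "y = c *s hom x" and "c \<noteq> 0" "x \<in> solset" unfolding cone_def by blast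
  then have e: "1 + x$i = x$(i+2) * x$(i+3)" for i using solset_iff by blast
  have "c * c + c * (c * x$i) = c * x$(i+2) * (c * x$(i+3))" for i
    using arg_cong[OF e[of i], of "\<lambda>t. c * c * t"] by (simp add: algebra_simps)
  then show "y \<in> Vh" unfolding Vh_def y by simp
qed

lemma closed_Vh: "closed (Vh :: ('a::real_normed_field, 5 option) vec set)"
  unfolding Vh_def
  by (intro closed_Collect_all closed_Collect_eq continuous_intros)

lemma closure_cone_sub: "closure cone \<subseteq> (Vh :: ('a::real_normed_field, 5 option) vec set)"
  by (rule closure_minimal[OF cone_sub_Vh closed_Vh])

lemma chart_None_eq:
  "chart None ` (proj_closure_cone (solset :: ('a::real_normed_field,5) vec set) \<inter> {y. y $ None \<noteq> 0}) = solset"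
proof (intro equalityI subsetI)
  fix z assume "z \<in> chart None ` (proj_closure_cone (solset :: ('a,5) vec set) \<inter> {y. y $ None \<noteq> 0})"
  then obtain y where y: "y \<in> closure cone" "y $ None \<noteq> 0" and z: "z = chart None y"
    unfolding pcc_eq by auto
  then have "y \<in> Vh" using closure_cone_sub by blast
  then have e: "y$None * y$None + y$None * y$Some i = y$Some (i+2) * y$Some (i+3)" for i
    unfolding Vh_def by blast
  have "1 + y$Some i / y$None = y$Some (i+2) / y$None * (y$Some (i+3) / y$None)" for i
    using e[of i] y(2) by (simp add: field_simps)
  then show "z \<in> solset" unfolding solset_iff z chart_def by simp
next
  fix x :: "('a,5) vec" assume x: "x \<in> solset"
  have "hom x \<in> cone" unfolding cone_def using x by (auto intro!: exI[of _ 1] exI[of _ x])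
  moreover have "hom x \<noteq> 0" by (metis hom_None one_neq_zero zero_index)
  moreover have "chart None (hom x) = x" by (simp add: chart_def vec_eq_iff)
  ultimately show "x \<in> chart None ` (proj_closure_cone solset \<inter> {y. y $ None \<noteq> 0})"
    unfolding pcc_eq by (auto intro!: image_eqI[of _ _ "hom x"] closure_subset[THEN subsetD])
qed



definition Gset :: "5 \<Rightarrow> ('a::real_normed_field, 5) vec set" where
  "Gset a = {z. z$(a+4) = z$a*z$a + z$a*z$(a+2) \<and> z$(a+1) = z$a*z$a + z$a*z$(a+3)
      \<and> z$(a+2)*z$(a+3) = z$a*z$a + z$a}"

definition lift :: "5 \<Rightarrow> ('a::real_normed_field, 5) vec \<Rightarrow> ('a, 5 option) vec" where
  "lift a z = (\<chi> j. case j of None \<Rightarrow> z$a | Some i \<Rightarrow> if i = a then 1 else z$i)"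

definition mk :: "5 \<Rightarrow> 'a \<Rightarrow> 'a \<Rightarrow> 'a \<Rightarrow> 'a \<Rightarrow> 'a \<Rightarrow> ('a::zero, 5) vec" where
  "mk a u w1 w2 w3 w4 = (\<chi> i. if i = a then u else if i = a+1 then w1 else if i = a+2 then w2
      else if i = a+3 then w3 else w4)"

lemma mk_nth[simp]: "mk a u w1 w2 w3 w4 $ a = u" "mk a u w1 w2 w3 w4 $ (a+1) = w1"
  "mk a u w1 w2 w3 w4 $ (a+2) = w2" "mk a u w1 w2 w3 w4 $ (a+3) = w3" "mk a u w1 w2 w3 w4 $ (a+4) = w4"
  by (simp_all add: mk_def idx_neq idx_neq[symmetric])

lemma mk_self: "z = mk a (z$a) (z$(a+1)) (z$(a+2)) (z$(a+3)) (z$(a+4))"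
proof -
  have "z$i = mk a (z$a) (z$(a+1)) (z$(a+2)) (z$(a+3)) (z$(a+4)) $ i" for i
  proof -
    have "i = a \<or> i = a+1 \<or> i = a+2 \<or> i = a+3 \<or> i = a+4" by (rule exhaust_rel)
    then show ?thesis by (elim disjE) (simp_all only: mk_nth)
  qed
  then show ?thesis unfolding vec_eq_iff by blast
qed

lemma chart_lift: "chart (Some a) (lift a z) = z"
  by (simp add: chart_def lift_def vec_eq_iff)

lemma lift_a[simp]: "lift a z $ Some a = 1"
  by (simp add: lift_def)

lemma tendsto_lift_mk:
  assumes "(f0 \<longlongrightarrow> l0) F" "(f1 \<longlongrightarrow> l1) F" "(f2 \<longlongrightarrow> l2) F" "(f3 \<longlongrightarrow> l3) F" "(f4 \<longlongrightarrow> l4) F"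
  shows "((\<lambda>t. lift a (mk a (f0 t) (f1 t) (f2 t) (f3 t) (f4 t)) :: ('a::real_normed_field, 5 option) vec)
     \<longlongrightarrow> lift a (mk a l0 l1 l2 l3 l4)) F"
  unfolding lift_def
  apply (rule tendsto_vec_lambda)
  subgoal for j
  proof (cases j)
    case None then show ?thesis using assms(1) by simp
  next
    case (Some i)
    have "i = a \<or> i = a+1 \<or> i = a+2 \<or> i = a+3 \<or> i = a+4" by (rule exhaust_rel)
    then show ?thesis
    proof (elim disjE)
      assume "i = a" then show ?thesis using Some by simp
    next
      assume i: "i = a+1" show ?thesis unfolding Some i using assms(2) idx_neq(1) by simp
    next
      assume i: "i = a+2" show ?thesis unfolding Some i using assms(3) idx_neq(2) by simp
    next
      assume i: "i = a+3" show ?thesis unfolding Some i using assms(4) idx_neq(3) by simp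
    next
      assume i: "i = a+4" show ?thesis unfolding Some i using assms(5) idx_neq(4) by simp
    qed
  qed
  done
lemma alg1:
  fixes u wA wB wC wD :: "'a::field"
  assumes "u \<noteq> 0" "wD = u*u + u*wB" "wA = u*u+u*wC" "wB*wC = u*u+u"
  shows "1 + 1/u = wB/u*(wC/u) \<and> 1 + wA/u = wC/u*(wD/u) \<and> 1 + wB/u = wD/u * (1/u)
    \<and> 1 + wC/u = 1/u*(wA/u) \<and> 1 + wD/u = wA/u*(wB/u)"
proof -
  have a1: "wC*wD = u*u*wC + u*(wB*wC)" using assms(2) by (simp add: algebra_simps)
  have a: "u*u + u*wA = wC*wD" unfolding a1 assms(4) assms(3) by (simp add: algebra_simps)
  have b1: "wA*wB = u*u*wB + u*(wB*wC)" using assms(3) by (simp add: algebra_simps)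
  have b: "u*u + u*wD = wA*wB" unfolding b1 assms(4) assms(2) by (simp add: algebra_simps)
  have c: "u*u + u*wB = wD" "u*u+u*wC = wA" using assms by simp_all
  have h: "L = R" if "u*u*L = u*u*R" for L R using that assms(1) by simp
  have hA: "u*u*(1 + p/u) = u*u + u*p" for p using assms(1) by (simp add: field_simps)
  have hB: "u*u*(p/u*(q/u)) = p*q" for p q using assms(1) by (simp add: field_simps)
  have "1 + 1/u = wB/u*(wC/u)" by (rule h) (simp only: hA hB assms(4) mult_1_right)
  moreover have "1 + wA/u = wC/u*(wD/u)" by (rule h) (simp only: hA hB a)
  moreover have "1 + wB/u = wD/u*(1/u)" by (rule h) (simp only: hA hB c(1) mult_1_right)
  moreover have "1 + wC/u = 1/u*(wA/u)" by (rule h) (simp only: hA hB c(2) mult_1_left)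
  moreover have "1 + wD/u = wA/u*(wB/u)" by (rule h) (simp only: hA hB b)
  ultimately show ?thesis by blast
qed

lemma lift_in_cone:
  fixes z :: "('a::real_normed_field, 5) vec"
  assumes "z \<in> Gset a" "z$a \<noteq> 0"
  shows "lift a z \<in> cone"
proof -
  define u where "u = z$a"
  define x :: "('a,5) vec" where "x = (\<chi> i. (lift a z $ Some i) / u)"
  have xa: "x$a = 1/u" and xk: "x$(a+1) = z$(a+1)/u" "x$(a+2) = z$(a+2)/u" "x$(a+3) = z$(a+3)/u" "x$(a+4) = z$(a+4)/u"
    by (simp_all add: x_def lift_def idx_neq)
  have "x \<in> solset"
    unfolding solset_iff_rel[where a=a] xa xk
    by (rule alg1[where u=u and wA="z$(a+1)" and wB="z$(a+2)" and wC="z$(a+3)" and wD="z$(a+4)"]) (use assms in \<open>auto simp: Gset_def u_def\<close>)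
  moreover have "lift a z = u *s hom x"
    unfolding vec_eq_iff
  proof
    fix j show "lift a z $ j = (u *s hom x) $ j"
    proof (cases j)
      case None then show ?thesis by (simp add: lift_def u_def)
    next
      case (Some i) 
      have "u \<noteq> 0" using assms(2) u_def by simp
      then show ?thesis unfolding Some by (simp add: x_def)
    qed
  qed
  ultimately show ?thesis unfolding cone_def using assms(2) u_def by blast
qed




lemma mk_in_Gset: "mk a u w1 w2 w3 w4 \<in> Gset a \<longleftrightarrow>
   w4 = u*u + u*w2 \<and> w1 = u*u + u*w3 \<and> w2*w3 = u*u + u"
  by (simp add: Gset_def)

lemma ofreal_tendsto0: "((\<lambda>t. of_real t :: 'a::real_normed_field) \<longlongrightarrow> 0) (at_right 0)"
proof -
  have "((\<lambda>t. of_real t :: 'a) \<longlongrightarrow> of_real 0) (at_right 0)"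
    by (intro tendsto_of_real tendsto_ident_at)
  then show ?thesis by simp
qed

lemma closure_K2:
  fixes p :: "'a::real_normed_field"
  assumes p: "p \<noteq> 0"
  shows "lift a (mk a 0 0 p 0 0) \<in> closure cone"
proof (rule Lim_in_closed_set[OF closed_closure _ trivial_limit_at_right_real])
  define g :: "real \<Rightarrow> 'a" where "g t = of_real t" for t
  define w3 where "w3 t = (g t * g t + g t) / p" for t
  let ?f = "\<lambda>t. lift a (mk a (g t) (g t * g t + g t * w3 t) p (w3 t) (g t * g t + g t * p))"
  show "\<forall>\<^sub>F t in at_right 0. ?f t \<in> closure cone"
    using eventually_at_right_less[of "0::real"]
  proof (rule eventually_mono)
    fix t :: real assume "0 < t"
    then have "g t \<noteq> 0" by (simp add: g_def)
    moreover have "mk a (g t) (g t * g t + g t * w3 t) p (w3 t) (g t * g t + g t * p) \<in> Gset a"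
      unfolding mk_in_Gset using p by (simp add: w3_def)
    ultimately show "?f t \<in> closure cone"
      using lift_in_cone closure_subset by fastforce
  qed
  have g0: "(g \<longlongrightarrow> 0) (at_right 0)" unfolding g_def by (rule ofreal_tendsto0)
  have w30: "(w3 \<longlongrightarrow> 0) (at_right 0)" unfolding w3_def using tendsto_divide[OF tendsto_add[OF tendsto_mult[OF g0 g0] g0] tendsto_const[of p]] p by simp
  have "(?f \<longlongrightarrow> lift a (mk a 0 (0*0 + 0*0) p 0 (0*0+0*p))) (at_right 0)"
    by (intro tendsto_lift_mk tendsto_intros g0 w30)
  then show "(?f \<longlongrightarrow> lift a (mk a 0 0 p 0 0)) (at_right 0)" by simp
qed

lemma closure_K3:
  fixes q :: "'a::real_normed_field"
  assumes q: "q \<noteq> 0"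
  shows "lift a (mk a 0 0 0 q 0) \<in> closure cone"
proof (rule Lim_in_closed_set[OF closed_closure _ trivial_limit_at_right_real])
  define g :: "real \<Rightarrow> 'a" where "g t = of_real t" for t
  define w2 where "w2 t = (g t * g t + g t) / q" for t
  let ?f = "\<lambda>t. lift a (mk a (g t) (g t * g t + g t * q) (w2 t) q (g t * g t + g t * w2 t))"
  show "\<forall>\<^sub>F t in at_right 0. ?f t \<in> closure cone"
    using eventually_at_right_less[of "0::real"]
  proof (rule eventually_mono)
    fix t :: real assume "0 < t"
    then have "g t \<noteq> 0" by (simp add: g_def)
    moreover have "mk a (g t) (g t * g t + g t * q) (w2 t) q (g t * g t + g t * w2 t) \<in> Gset a"
      unfolding mk_in_Gset using q by (simp add: w2_def)
    ultimately show "?f t \<in> closure cone"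
      using lift_in_cone closure_subset by fastforce
  qed
  have g0: "(g \<longlongrightarrow> 0) (at_right 0)" unfolding g_def by (rule ofreal_tendsto0)
  have w20: "(w2 \<longlongrightarrow> 0) (at_right 0)" unfolding w2_def using tendsto_divide[OF tendsto_add[OF tendsto_mult[OF g0 g0] g0] tendsto_const[of q]] q by simp
  have "(?f \<longlongrightarrow> lift a (mk a 0 (0*0 + 0*q) 0 q (0*0+0*0))) (at_right 0)"
    by (intro tendsto_lift_mk tendsto_intros g0 w20)
  then show "(?f \<longlongrightarrow> lift a (mk a 0 0 0 q 0)) (at_right 0)" by simp
qed

lemma closure_K4:
  shows "lift a (mk a 0 0 0 0 0) \<in> (closure cone :: ('a::real_normed_field, 5 option) vec set)"
proof (rule Lim_in_closed_set[OF closed_closure _ trivial_limit_at_right_real])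
  define g :: "real \<Rightarrow> 'a" where "g t = of_real t" for t
  let ?f = "\<lambda>t. lift a (mk a 0 0 (g t) 0 0)"
  show "\<forall>\<^sub>F t in at_right 0. ?f t \<in> closure cone"
    using eventually_at_right_less[of "0::real"]
  proof (rule eventually_mono)
    fix t :: real assume "0 < t"
    then have "g t \<noteq> 0" by (simp add: g_def)
    then show "?f t \<in> closure cone" by (rule closure_K2)
  qed
  have g0: "(g \<longlongrightarrow> 0) (at_right 0)" unfolding g_def by (rule ofreal_tendsto0)
  show "(?f \<longlongrightarrow> lift a (mk a 0 0 0 0 0)) (at_right 0)"
    by (intro tendsto_lift_mk tendsto_intros g0)
qed

lemma Gset_in_closure:
  fixes z :: "('a::real_normed_field, 5) vec"
  assumes z: "z \<in> Gset a"
  shows "lift a z \<in> closure cone"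
proof (cases "z$a = 0")
  case False
  then show ?thesis using lift_in_cone[OF z] closure_subset by blast
next
  case True
  have e: "z$(a+4) = 0" "z$(a+1) = 0" "z$(a+2) * z$(a+3) = 0" using z True by (simp_all add: Gset_def)
  have zz: "z = mk a 0 0 (z$(a+2)) (z$(a+3)) 0" using mk_self[of z a] True e by simp
  show ?thesis
  proof (cases "z$(a+2) = 0")
    case True2: True
    show ?thesis
    proof (cases "z$(a+3) = 0")
      case True
      then show ?thesis using closure_K4 zz True2 by metis
    next
      case False
      then show ?thesis using closure_K3 zz True2 by metis
    qed
  next
    case False
    then have "z$(a+3) = 0" using e by simp
    then show ?thesis using closure_K2 zz False by metis
  qed
qed

lemma chart_Some_eq:
  "chart (Some a) ` (proj_closure_cone (solset :: ('a::real_normed_field,5) vec set) \<inter> {y. y $ Some a \<noteq> 0}) = Gset a"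
proof (intro equalityI subsetI)
  fix z assume "z \<in> chart (Some a) ` (proj_closure_cone (solset :: ('a,5) vec set) \<inter> {y. y $ Some a \<noteq> 0})"
  then obtain y where y: "y \<in> closure cone" "y $ Some a \<noteq> 0" and z: "z = chart (Some a) y"
    unfolding pcc_eq by auto
  then have "y \<in> Vh" using closure_cone_sub by blast
  then have e: "y$None * y$None + y$None * y$Some i = y$Some (i+2) * y$Some (i+3)" for i
    unfolding Vh_def by blast
  define d where "d = y $ Some a"
  define t where "t = y $ None"
  have d: "d \<noteq> 0" using y d_def by simp
  have e1: "t*t + t * y$Some (a+2) = y$Some(a+4) * d"
    using e[of "a+2"] unfolding d_def t_def by (simp add: idx_simps)
  have e2: "t*t + t * y$Some (a+3) = d * y$Some(a+1)"
    using e[of "a+3"] unfolding d_def t_def by (simp add: idx_simps)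
  have e3: "t*t + t * d = y$Some(a+2) * y$Some(a+3)"
    using e[of "a"] unfolding d_def t_def by simp
  have zc: "z$a = t/d" "z$(a+1) = y$Some(a+1)/d" "z$(a+2) = y$Some(a+2)/d" "z$(a+3) = y$Some(a+3)/d"
     "z$(a+4) = y$Some(a+4)/d"
    unfolding z chart_def d_def t_def by (simp_all add: idx_neq)
  have h: "L = R" if "d*d*L = d*d*R" for L R using that d by simp
  show "z \<in> Gset a" unfolding Gset_def mem_Collect_eq zc
  proof (intro conjI)
    show "y $ Some (a + 4) / d = t / d * (t / d) + t / d * (y $ Some (a + 2) / d)"
      by (rule h) (use d e1 in \<open>simp add: field_simps\<close>)
    show "y $ Some (a + 1) / d = t / d * (t / d) + t / d * (y $ Some (a + 3) / d)"
      by (rule h) (use d e2 in \<open>simp add: field_simps\<close>)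
    show "y $ Some (a + 2) / d * (y $ Some (a + 3) / d) = t / d * (t / d) + t / d"
      by (rule h) (use d e3 in \<open>simp add: field_simps\<close>)
  qed
next
  fix z :: "('a,5) vec" assume z: "z \<in> Gset a"
  have "lift a z \<in> closure cone" by (rule Gset_in_closure[OF z])
  moreover have "lift a z \<noteq> 0" by (metis lift_a one_neq_zero zero_index)
  ultimately show "z \<in> chart (Some a) ` (proj_closure_cone solset \<inter> {y. y $ Some a \<noteq> 0})"
    unfolding pcc_eq by (auto intro!: image_eqI[of _ _ "lift a z"] simp: chart_lift)
qed



lemma norm_vec_le_sum: "norm (x::('a::real_normed_vector,'n::finite) vec) \<le> (\<Sum>i\<in>UNIV. norm (x$i))"
  unfolding norm_vec_def by (rule L2_set_le_sum) auto

lemma bounded_linear_vec_lambda: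
  assumes "\<And>i. bounded_linear (f i)"
  shows "bounded_linear (\<lambda>h. (\<chi> i. f i h) :: ('b::real_normed_vector, 'n::finite) vec)"
proof -
  have "\<forall>i. \<exists>K. \<forall>x. norm (f i x) \<le> norm x * K"
    using assms bounded_linear.bounded by blast
  then obtain K where K: "\<And>i x. norm (f i x) \<le> norm x * K i"
    by metis
  show ?thesis
  proof (rule bounded_linear_intro[where K="\<Sum>i\<in>UNIV. K i"])
    show "(\<chi> i. f i (x + y)) = (\<chi> i. f i x) + (\<chi> i. f i y)" for x y
      using assms by (simp add: vec_eq_iff linear_add[OF bounded_linear.linear])
    show "(\<chi> i. f i (r *\<^sub>R x)) = r *\<^sub>R (\<chi> i. f i x)" for r x
      using assms by (simp add: vec_eq_iff linear_scale[OF bounded_linear.linear])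
    show "norm (\<chi> i. f i x) \<le> norm x * (\<Sum>i\<in>UNIV. K i)" for x
    proof -
      have "norm (\<chi> i. f i x) \<le> (\<Sum>i\<in>UNIV. norm (f i x))"
        using norm_vec_le_sum[of "\<chi> i. f i x"] by simp
      also have "\<dots> \<le> (\<Sum>i\<in>UNIV. norm x * K i)" by (rule sum_mono) (rule K)
      finally show ?thesis by (simp add: sum_distrib_left)
    qed
  qed
qed

lemma has_derivative_vec_lambda:
  assumes "\<And>i. (f i has_derivative f' i) F"
  shows "((\<lambda>x. (\<chi> i. f i x) :: ('b::real_normed_vector, 'n::finite) vec) has_derivative (\<lambda>h. \<chi> i. f' i h)) F"
proof -
  have e: "(\<lambda>y. ((\<chi> i. f i y) - (\<chi> i. f i (netlimit F)) - (\<chi> i. f' i (y - netlimit F))) /\<^sub>R norm (y - netlimit F))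
    = (\<lambda>y. \<chi> i. (f i y - f i (netlimit F) - f' i (y - netlimit F)) /\<^sub>R norm (y - netlimit F))"
    by (rule ext) (simp add: vec_eq_iff)
  have z: "(0::('b,'n) vec) = (\<chi> i. 0)" by (simp add: vec_eq_iff)
  show ?thesis
    using assms unfolding has_derivative_def e
    by (subst z) (auto intro!: bounded_linear_vec_lambda tendsto_vec_lambda)
qed

lemma has_derivative_vec_nth_at[derivative_intros]: "((\<lambda>x. x $ i) has_derivative (\<lambda>h. h $ i)) F"
  by (rule bounded_linear_imp_has_derivative) (rule bounded_linear_vec_nth)

definition Fc :: "5 \<Rightarrow> 3 \<Rightarrow> ('a::real_normed_field, 5) vec \<Rightarrow> 'a" where
  "Fc a k x = (if k = 1 then x$a * x$(a+4) - 1 - x$(a+2) else if k = 2 then x$(a+2)*x$(a+3) - 1 - x$a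
     else x$(a+2)*x$(a+1) - 1 - x$(a+4))"

definition DFc :: "5 \<Rightarrow> 3 \<Rightarrow> ('a::real_normed_field, 5) vec \<Rightarrow> ('a, 5) vec \<Rightarrow> 'a" where
  "DFc a k x h = (if k = 1 then x$a * h$(a+4) + h$a * x$(a+4) - h$(a+2)
     else if k = 2 then x$(a+2)*h$(a+3) + h$(a+2)*x$(a+3) - h$a
     else x$(a+2)*h$(a+1) + h$(a+2)*x$(a+1) - h$(a+4))"

definition "Fa a x = (\<chi> k. Fc a k x)"
definition "DFa a x h = (\<chi> k. DFc a k x h)"

lemma Fc_deriv: "(Fc a k has_derivative DFc a k x) (at x)"
proof -
  consider "k = 1" | "k = 2" | "k = 3" using exhaust_3 by blast
  then show ?thesis
  proof cases
    case 1
    then show ?thesis unfolding Fc_def[abs_def] DFc_def[abs_def]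
      by (simp, intro derivative_eq_intros) auto
  next
    case 2
    then show ?thesis unfolding Fc_def[abs_def] DFc_def[abs_def]
      by (simp, intro derivative_eq_intros) auto
  next
    case 3
    then show ?thesis unfolding Fc_def[abs_def] DFc_def[abs_def]
      by (simp, intro derivative_eq_intros) auto
  qed
qed

lemma Fa_deriv: "(Fa a has_derivative DFa a x) (at x)"
  unfolding Fa_def[abs_def] DFa_def[abs_def]
  by (rule has_derivative_vec_lambda) (rule Fc_deriv)

lemma DFa_lin: "DFa a x (c *s v) = c *s DFa a x v"
  by (simp add: DFa_def DFc_def vec_eq_iff algebra_simps)

lemma DFa_surj:
  assumes "x$a \<noteq> 0" "x$(a+2) \<noteq> 0"
  shows "surj (DFa a x)"
proof -
  have "DFa a x (mk a 0 ((b$3 + b$1/x$a)/x$(a+2)) 0 (b$2/x$(a+2)) (b$1/x$a)) = b" for b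
    unfolding DFa_def DFc_def vec_eq_iff forall_3 using assms by simp
  then show ?thesis unfolding surj_def by metis
qed

lemma alg2:
  fixes p q r t w :: "'a::field"
  assumes q: "q \<noteq> 0" and e: "1+p = q*t" "1+q = r*p" "1+r = w*q"
  shows "1+w = t*r \<and> 1+t = p*w"
proof -
  have "q*(1+w) = q*(t*r)"
  proof -
    have "q*(1+w) = q + 1 + r" using e(3) by (simp add: algebra_simps)
    also have "\<dots> = (1+p)*r" using e(2) by (simp add: algebra_simps)
    also have "\<dots> = q*(t*r)" using e(1) by simp
    finally show ?thesis .
  qed
  moreover have "q*(1+t) = q*(p*w)"
  proof -
    have "q*(1+t) = q + 1 + p" using e(1) by (simp add: algebra_simps)
    also have "\<dots> = p*(1+r)" using e(2) by (simp add: algebra_simps)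
    also have "\<dots> = q*(p*w)" using e(3) by (simp add: algebra_simps)
    finally show ?thesis .
  qed
  ultimately show ?thesis using q by simp
qed

lemma Fa_zero:
  assumes "x$(a+2) \<noteq> 0"
  shows "Fa a x = 0 \<longleftrightarrow> x \<in> solset"
proof -
  have "Fa a x = 0 \<longleftrightarrow> x$a * x$(a+4) - 1 - x$(a+2) = 0 \<and> x$(a+2)*x$(a+3) - 1 - x$a = 0
     \<and> x$(a+2)*x$(a+1) - 1 - x$(a+4) = 0"
    unfolding Fa_def Fc_def vec_eq_iff forall_3 by simp
  also have "\<dots> \<longleftrightarrow> 1 + x$a = x$(a+2) * x$(a+3) \<and> 1 + x$(a+2) = x$(a+4) * x$a \<and>
       1 + x$(a+4) = x$(a+1) * x$(a+2)"
    by (auto simp: algebra_simps)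
  also have "\<dots> \<longleftrightarrow> x \<in> solset"
    unfolding solset_iff_rel[where a=a]
    using alg2[where q="x$(a+2)" and p="x$a" and t="x$(a+3)" and r="x$(a+4)" and w="x$(a+1)"] assms
    by (auto simp: algebra_simps)
  finally show ?thesis .
qed

lemma solset_pair:
  assumes "x \<in> solset"
  shows "\<exists>a. x$a \<noteq> 0 \<and> x$(a+2) \<noteq> 0"
proof (rule ccontr)
  assume "\<not> ?thesis"
  then have n: "x$a = 0 \<or> x$(a+2) = 0" for a by blast
  have e: "1 + x$a = x$(a+2) * x$(a+3)" for a using assms solset_iff by blast
  have nz: "\<not> (x$a = 0 \<and> x$(a+2) = 0)" for a using e[of a] by auto
  have "x$0 = 0 \<or> x$2 = 0" "x$2 = 0 \<or> x$4 = 0" "x$4 = 0 \<or> x$1 = 0" "x$1 = 0 \<or> x$3 = 0" "x$3 = 0 \<or> x$0 = 0"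
    using n[of 0] n[of 2] n[of 4] n[of 1] n[of 3] by (simp_all add: num5)
  moreover have "\<not> (x$0 = 0 \<and> x$2 = 0)" "\<not> (x$2 = 0 \<and> x$4 = 0)" "\<not> (x$4 = 0 \<and> x$1 = 0)"
    "\<not> (x$1 = 0 \<and> x$3 = 0)" "\<not> (x$3 = 0 \<and> x$0 = 0)"
    using nz[of 0] nz[of 2] nz[of 4] nz[of 1] nz[of 3] by (simp_all add: num5)
  ultimately show False by blast
qed



definition Pc :: "5 \<Rightarrow> 3 \<Rightarrow> ('a::real_normed_field, 5) vec \<Rightarrow> 'a" where
  "Pc a k z = (if k = 1 then z$(a+4) - z$a*z$a - z$a*z$(a+2)
     else if k = 2 then z$(a+1) - z$a*z$a - z$a*z$(a+3)
     else z$(a+2)*z$(a+3) - z$a*z$a - z$a)"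

definition DPc :: "5 \<Rightarrow> 3 \<Rightarrow> ('a::real_normed_field, 5) vec \<Rightarrow> ('a, 5) vec \<Rightarrow> 'a" where
  "DPc a k z h = (if k = 1 then h$(a+4) - 2*z$a*h$a - h$a*z$(a+2) - z$a*h$(a+2)
     else if k = 2 then h$(a+1) - 2*z$a*h$a - h$a*z$(a+3) - z$a*h$(a+3)
     else z$(a+2)*h$(a+3) + h$(a+2)*z$(a+3) - (2*z$a + 1)*h$a)"

definition "Pa a x = (\<chi> k. Pc a k x)"
definition "DPa a x h = (\<chi> k. DPc a k x h)"

lemma Pc_deriv: "(Pc a k has_derivative DPc a k x) (at x)"
proof -
  consider "k = 1" | "k = 2" | "k = 3" using exhaust_3 by blast
  then show ?thesis
  proof cases
    case 1
    have e1: "Pc a k = (\<lambda>z. z$(a+4) - z$a*z$a - z$a*z$(a+2))" using 1 by (simp add: Pc_def fun_eq_iff)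
    have e2: "DPc a k x = (\<lambda>h. h$(a+4) - (x$a*h$a + h$a*x$a) - (x$a*h$(a+2) + h$a*x$(a+2)))" using 1 by (simp add: DPc_def fun_eq_iff algebra_simps)
    show ?thesis unfolding e1 e2
      by (intro derivative_eq_intros) auto
  next
    case 2
    have e1: "Pc a k = (\<lambda>z. z$(a+1) - z$a*z$a - z$a*z$(a+3))" using 2 by (simp add: Pc_def fun_eq_iff)
    have e2: "DPc a k x = (\<lambda>h. h$(a+1) - (x$a*h$a + h$a*x$a) - (x$a*h$(a+3) + h$a*x$(a+3)))" using 2 by (simp add: DPc_def fun_eq_iff algebra_simps)
    show ?thesis unfolding e1 e2
      by (intro derivative_eq_intros) auto
  next
    case 3
    have e1: "Pc a k = (\<lambda>z. z$(a+2)*z$(a+3) - z$a*z$a - z$a)" using 3 by (simp add: Pc_def fun_eq_iff)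
    have e2: "DPc a k x = (\<lambda>h. (x$(a+2)*h$(a+3) + h$(a+2)*x$(a+3)) - (x$a*h$a + h$a*x$a) - h$a)" using 3 by (simp add: DPc_def fun_eq_iff algebra_simps)
    show ?thesis unfolding e1 e2
      by (intro derivative_eq_intros) auto
  qed
qed

lemma Pa_deriv: "(Pa a has_derivative DPa a x) (at x)"
  unfolding Pa_def[abs_def] DPa_def[abs_def]
  by (rule has_derivative_vec_lambda) (rule Pc_deriv)

lemma DPa_lin: "DPa a x (c *s v) = c *s DPa a x v"
  by (simp add: DPa_def DPc_def vec_eq_iff algebra_simps)

definition "Wset a = {z::('a::real_normed_field,5) vec. z$(a+2) \<noteq> 0 \<or> z$(a+3) \<noteq> 0 \<or> 2*z$a + 1 \<noteq> 0}"

lemma open_Wset: "open (Wset a :: ('a::real_normed_field,5) vec set)"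
proof -
  have "(Wset a :: ('a,5) vec set) = {z. z$(a+2) \<noteq> 0} \<union> {z. z$(a+3) \<noteq> 0} \<union> {z. 2*z$a + 1 \<noteq> 0}"
    unfolding Wset_def by auto
  then show ?thesis
    by (simp only:) (intro open_Un open_Collect_neq continuous_intros)
qed

lemma Gset_sub_Wset: "Gset a \<subseteq> (Wset a :: ('a::real_normed_field,5) vec set)"
proof
  fix z :: "('a,5) vec" assume z: "z \<in> Gset a"
  show "z \<in> Wset a"
  proof (rule ccontr)
    assume "z \<notin> Wset a"
    then have h: "z$(a+2) = 0" "z$(a+3) = 0" "2*z$a + 1 = 0" unfolding Wset_def by auto
    then have "z$a*z$a + z$a = 0" using z unfolding Gset_def by simp
    then have "4*(z$a*z$a + z$a) = 0" by simp
    moreover have "4*(z$a*z$a + z$a) = (2*z$a + 1)*(2*z$a+1) - 1" by (simp add: algebra_simps)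
    ultimately show False using h(3) by simp
  qed
qed

lemma DPa_surj:
  assumes "z \<in> Wset a"
  shows "surj (DPa a z)"
proof -
  have "\<exists>h. DPa a z h = b" for b
  proof -
    have "\<exists>ha h2 h3. z$(a+2)*h3 + h2*z$(a+3) - (2*z$a + 1)*ha = b$3"
    proof -
      consider "z$(a+2) \<noteq> 0" | "z$(a+3) \<noteq> 0" | "2*z$a + 1 \<noteq> 0" using assms Wset_def by blast
      then show ?thesis
      proof cases
        case 1 then show ?thesis by (intro exI[of _ 0] exI[of _ "b$3 / z$(a+2)"]) simp
      next
        case 2 then show ?thesis by (intro exI[of _ 0] exI[of _ "b$3 / z$(a+3)"]) simp
      next
        case 3 then show ?thesis by (intro exI[of _ "- b$3 / (2*z$a + 1)"] exI[of _ 0]) simp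
      qed
    qed
    then obtain ha h2 h3 where T: "z$(a+2)*h3 + h2*z$(a+3) - (2*z$a + 1)*ha = b$3" by blast
    define h where "h = mk a ha (b$2 + 2*z$a*ha + ha*z$(a+3) + z$a*h3) h2 h3 (b$1 + 2*z$a*ha + ha*z$(a+2) + z$a*h2)"
    have "DPa a z h = b"
      unfolding DPa_def DPc_def vec_eq_iff forall_3 h_def using T by simp
    then show ?thesis by blast
  qed
  then show ?thesis unfolding surj_def by metis
qed

lemma Pa_zero: "Pa a z = 0 \<longleftrightarrow> z \<in> Gset a"
  unfolding Pa_def Pc_def vec_eq_iff forall_3 Gset_def by (auto simp: algebra_simps)



inductive polyf :: "((real, 5) vec \<Rightarrow> real) \<Rightarrow> bool" where
  pc: "polyf (\<lambda>x. c)"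
| pv: "polyf (\<lambda>x. x $ i)"
| padd: "polyf f \<Longrightarrow> polyf g \<Longrightarrow> polyf (\<lambda>x. f x + g x)"
| pmul: "polyf f \<Longrightarrow> polyf g \<Longrightarrow> polyf (\<lambda>x. f x * g x)"

lemma pdiff: "polyf f \<Longrightarrow> polyf g \<Longrightarrow> polyf (\<lambda>x. f x - g x)"
proof -
  assume "polyf f" "polyf g"
  then have "polyf (\<lambda>x. f x + (\<lambda>x. -1) x * g x)" by (intro padd pmul pc)
  then show ?thesis by simp
qed

lemma polyf_deriv: "polyf f \<Longrightarrow> \<exists>D. (\<forall>x. (f has_derivative D x) (at x)) \<and> (\<forall>v. polyf (\<lambda>x. D x v))"
proof (induction rule: polyf.induct)
  case (pc c)
  show ?case by (rule exI[of _ "\<lambda>x h. 0"]) (auto intro: polyf.pc)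
next
  case (pv i)
  show ?case by (rule exI[of _ "\<lambda>x h. h $ i"]) (auto intro: polyf.pc has_derivative_vec_nth_at)
next
  case (padd f g)
  then obtain Df Dg where f: "\<forall>x. (f has_derivative Df x) (at x)" "\<forall>v. polyf (\<lambda>x. Df x v)"
    and g: "\<forall>x. (g has_derivative Dg x) (at x)" "\<forall>v. polyf (\<lambda>x. Dg x v)" by blast
  show ?case
    by (rule exI[of _ "\<lambda>x h. Df x h + Dg x h"]) (use f g in \<open>auto intro: polyf.padd has_derivative_add\<close>)
next
  case (pmul f g)
  then obtain Df Dg where f: "\<forall>x. (f has_derivative Df x) (at x)" "\<forall>v. polyf (\<lambda>x. Df x v)"
    and g: "\<forall>x. (g has_derivative Dg x) (at x)" "\<forall>v. polyf (\<lambda>x. Dg x v)" by blast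
  show ?case
    by (rule exI[of _ "\<lambda>x h. f x * Dg x h + Df x h * g x"])
       (use f g pmul.hyps in \<open>auto intro!: polyf.padd polyf.pmul has_derivative_mult\<close>)
qed

lemma polyvec_step:
  fixes G :: "(real,5) vec \<Rightarrow> (real,3) vec"
  assumes "\<forall>k. polyf (\<lambda>x. G x $ k)"
  shows "(\<forall>x. G differentiable (at x)) \<and> (\<forall>v k. polyf (\<lambda>x. frechet_derivative G (at x) v $ k))"
proof -
  have "\<forall>k. \<exists>D. (\<forall>x. ((\<lambda>x. G x $ k) has_derivative D x) (at x)) \<and> (\<forall>v. polyf (\<lambda>x. D x v))"
    using assms polyf_deriv by blast
  then obtain D where D: "\<And>k x. ((\<lambda>x. G x $ k) has_derivative D k x) (at x)" "\<And>k v. polyf (\<lambda>x. D k x v)"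
    by metis
  have Geq: "G = (\<lambda>x. \<chi> k. G x $ k)" by simp
  have hd: "(G has_derivative (\<lambda>h. \<chi> k. D k x h)) (at x)" for x
    by (subst Geq) (rule has_derivative_vec_lambda[OF D(1)])
  have fd: "frechet_derivative G (at x) = (\<lambda>h. \<chi> k. D k x h)" for x
    using frechet_derivative_at[OF hd[of x]] by simp
  show ?thesis
    using hd D(2) unfolding fd differentiable_def by auto
qed

lemma polyvec_smooth:
  fixes F :: "(real,5) vec \<Rightarrow> (real,3) vec"
  assumes "\<forall>k. polyf (\<lambda>x. F x $ k)"
  shows "smooth_on U F"
proof -
  have "\<forall>k. polyf (\<lambda>x. iter_dd vs F x $ k)" for vs
  proof (induction vs)
    case Nil then show ?case using assms by simp
  next
    case (Cons v vs)
    then show ?case using polyvec_step[of "iter_dd vs F"] by simp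
  qed
  then show ?thesis unfolding smooth_on_def using polyvec_step by blast
qed

lemma Fa_poly: "\<forall>k. polyf (\<lambda>x. Fa a x $ k)"
proof
  fix k :: 3
  consider "k = 1" | "k = 2" | "k = 3" using exhaust_3 by blast
  then show "polyf (\<lambda>x. Fa a x $ k)"
    by cases (simp_all add: Fa_def Fc_def, (intro pdiff pmul pv pc)+)
qed

lemma Pa_poly: "\<forall>k. polyf (\<lambda>x. Pa a x $ k)"
proof
  fix k :: 3
  consider "k = 1" | "k = 2" | "k = 3" using exhaust_3 by blast
  then show "polyf (\<lambda>x. Pa a x $ k)"
    by cases (simp_all add: Pa_def Pc_def, (intro pdiff pmul pv pc)+)
qed

lemma open_Ua: "open {x::('a::real_normed_field,5) vec. x$a \<noteq> 0 \<and> x$(a+2) \<noteq> 0}"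
  by (intro open_Collect_conj open_Collect_neq continuous_intros)

lemma real_solset: "real_submanifold TYPE(3) (solset :: (real,5) vec set)"
  unfolding real_submanifold_def
proof
  fix p :: "(real,5) vec" assume p: "p \<in> solset"
  then obtain a where a: "p$a \<noteq> 0" "p$(a+2) \<noteq> 0" using solset_pair by blast
  let ?U = "{x::(real,5) vec. x$a \<noteq> 0 \<and> x$(a+2) \<noteq> 0}"
  have "open ?U \<and> p \<in> ?U \<and> smooth_on ?U (Fa a) \<and>
       (\<forall>x\<in>?U. surj (frechet_derivative (Fa a) (at x))) \<and>
       solset \<inter> ?U = {x\<in>?U. Fa a x = 0}"
  proof (intro conjI ballI)
    show "open ?U" by (rule open_Ua)
    show "p \<in> ?U" using a by simp
    show "smooth_on ?U (Fa a)" by (rule polyvec_smooth[OF Fa_poly])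
    show "surj (frechet_derivative (Fa a) (at x))" if "x \<in> ?U" for x
      using DFa_surj[of x a] that frechet_derivative_at[OF Fa_deriv[of a x]] by simp
    show "solset \<inter> ?U = {x\<in>?U. Fa a x = 0}" using Fa_zero by blast
  qed
  then show "\<exists>U (F :: (real, 5) vec \<Rightarrow> (real, 3) vec).
       open U \<and> p \<in> U \<and> smooth_on U F \<and> (\<forall>x\<in>U. surj (frechet_derivative F (at x))) \<and>
       solset \<inter> U = {x\<in>U. F x = 0}" by blast
qed

lemma real_Gset: "real_submanifold TYPE(3) (Gset a :: (real,5) vec set)"
  unfolding real_submanifold_def
proof
  fix p :: "(real,5) vec" assume p: "p \<in> Gset a"
  have "open (Wset a :: (real,5) vec set) \<and> p \<in> Wset a \<and> smooth_on (Wset a :: (real,5) vec set) (Pa a :: (real,5) vec \<Rightarrow> (real,3) vec) \<and>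
       (\<forall>x\<in>(Wset a :: (real,5) vec set). surj (frechet_derivative (Pa a :: (real,5) vec \<Rightarrow> (real,3) vec) (at x))) \<and>
       (Gset a :: (real,5) vec set) \<inter> Wset a = {x\<in>Wset a. Pa a x = (0::(real,3) vec)}"
  proof (intro conjI ballI)
    show "open (Wset a :: (real,5) vec set)" by (rule open_Wset)
    show "p \<in> Wset a" using p Gset_sub_Wset by blast
    show "smooth_on (Wset a :: (real,5) vec set) (Pa a :: (real,5) vec \<Rightarrow> (real,3) vec)" by (rule polyvec_smooth[OF Pa_poly])
    show "surj (frechet_derivative (Pa a :: (real,5) vec \<Rightarrow> (real,3) vec) (at x))" if "x \<in> Wset a" for x :: "(real,5) vec"
      using DPa_surj[OF that] frechet_derivative_at[OF Pa_deriv[of a x]] by simp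
    show "Gset a \<inter> Wset a = {x\<in>Wset a. Pa a x = (0 :: (real,3) vec)}" using Pa_zero Gset_sub_Wset by blast
  qed
  then show "\<exists>U (F :: (real, 5) vec \<Rightarrow> (real, 3) vec).
       open U \<and> p \<in> U \<and> smooth_on U F \<and> (\<forall>x\<in>U. surj (frechet_derivative F (at x))) \<and>
       Gset a \<inter> U = {x\<in>U. F x = 0}" by blast
qed

lemma cx_solset: "complex_submanifold TYPE(3) (solset :: (complex,5) vec set)"
  unfolding complex_submanifold_def
proof
  fix p :: "(complex,5) vec" assume p: "p \<in> solset"
  then obtain a where a: "p$a \<noteq> 0" "p$(a+2) \<noteq> 0" using solset_pair by blast
  let ?U = "{x::(complex,5) vec. x$a \<noteq> 0 \<and> x$(a+2) \<noteq> 0}"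
  have "open ?U \<and> p \<in> ?U \<and>
       (\<forall>x\<in>?U. \<exists>L. (Fa a has_derivative L) (at x) \<and> (\<forall>c v. L (c *s v) = c *s L v) \<and> surj L) \<and>
       solset \<inter> ?U = {x\<in>?U. Fa a x = 0}"
  proof (intro conjI ballI)
    show "open ?U" by (rule open_Ua)
    show "p \<in> ?U" using a by simp
    show "\<exists>L. (Fa a has_derivative L) (at x) \<and> (\<forall>c v. L (c *s v) = c *s L v) \<and> surj L" if "x \<in> ?U" for x
      using DFa_surj[of x a] that Fa_deriv[of a x] DFa_lin by blast
    show "solset \<inter> ?U = {x\<in>?U. Fa a x = 0}" using Fa_zero by blast
  qed
  then show "\<exists>U (F :: (complex, 5) vec \<Rightarrow> (complex, 3) vec).
       open U \<and> p \<in> U \<and>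
       (\<forall>x\<in>U. \<exists>L. (F has_derivative L) (at x) \<and> (\<forall>c v. L (c *s v) = c *s L v) \<and> surj L) \<and>
       solset \<inter> U = {x\<in>U. F x = 0}" by blast
qed

lemma cx_Gset: "complex_submanifold TYPE(3) (Gset a :: (complex,5) vec set)"
  unfolding complex_submanifold_def
proof
  fix p :: "(complex,5) vec" assume p: "p \<in> Gset a"
  have "open (Wset a :: (complex,5) vec set) \<and> p \<in> Wset a \<and>
       (\<forall>x\<in>(Wset a :: (complex,5) vec set). \<exists>L. ((Pa a :: (complex,5) vec \<Rightarrow> (complex,3) vec) has_derivative L) (at x) \<and> (\<forall>c v. L (c *s v) = c *s L v) \<and> surj L) \<and>
       (Gset a :: (complex,5) vec set) \<inter> Wset a = {x\<in>Wset a. Pa a x = (0::(complex,3) vec)}"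
  proof (intro conjI ballI)
    show "open (Wset a :: (complex,5) vec set)" by (rule open_Wset)
    show "p \<in> Wset a" using p Gset_sub_Wset by blast
    show "\<exists>L. ((Pa a :: (complex,5) vec \<Rightarrow> (complex,3) vec) has_derivative L) (at x) \<and> (\<forall>c v. L (c *s v) = c *s L v) \<and> surj L"
      if "x \<in> Wset a" for x :: "(complex,5) vec"
      using DPa_surj[OF that] Pa_deriv[of a x] DPa_lin by blast
    show "Gset a \<inter> Wset a = {x\<in>Wset a. Pa a x = (0 :: (complex,3) vec)}" using Pa_zero Gset_sub_Wset by blast
  qed
  then show "\<exists>U (F :: (complex, 5) vec \<Rightarrow> (complex, 3) vec).
       open U \<and> p \<in> U \<and>
       (\<forall>x\<in>U. \<exists>L. (F has_derivative L) (at x) \<and> (\<forall>c v. L (c *s v) = c *s L v) \<and> surj L) \<and>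
       Gset a \<inter> U = {x\<in>U. F x = 0}" by blast
qed

lemma compact_pcc: "compact (proj_closure_cone (solset :: ('a::{real_normed_field,heine_borel},5) vec set) \<inter> sphere 0 1)"
proof -
  have "proj_closure_cone (solset :: ('a,5) vec set) \<inter> sphere 0 1 = closure cone \<inter> sphere 0 1"
    unfolding pcc_eq by auto
  then show ?thesis by (simp add: closed_Int_compact compact_sphere)
qed

theorem theorem2p1:
  shows "real_submanifold TYPE(3) (solset :: (real, 5) vec set)
    \<and> (\<forall>k. real_submanifold TYPE(3)
            (chart k ` (proj_closure_cone (solset :: (real, 5) vec set) \<inter> {y. y $ k \<noteq> 0})))
    \<and> compact (proj_closure_cone (solset :: (real, 5) vec set) \<inter> sphere 0 1)
    \<and> (\<forall>k. complex_submanifold TYPE(3)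
            (chart k ` (proj_closure_cone (solset :: (complex, 5) vec set) \<inter> {y. y $ k \<noteq> 0})))
    \<and> compact (proj_closure_cone (solset :: (complex, 5) vec set) \<inter> sphere 0 1)"
proof (intro conjI allI)
  show "real_submanifold TYPE(3) (solset :: (real, 5) vec set)" by (rule real_solset)
  show "real_submanifold TYPE(3)
            (chart k ` (proj_closure_cone (solset :: (real, 5) vec set) \<inter> {y. y $ k \<noteq> 0}))" for k
    by (cases k) (simp_all only: chart_None_eq chart_Some_eq real_solset real_Gset)
  show "complex_submanifold TYPE(3)
            (chart k ` (proj_closure_cone (solset :: (complex, 5) vec set) \<inter> {y. y $ k \<noteq> 0}))" for k
    by (cases k) (simp_all only: chart_None_eq chart_Some_eq cx_solset cx_Gset)
  show "compact (proj_closure_cone (solset :: (real, 5) vec set) \<inter> sphere 0 1)" by (rule compact_pcc)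
  show "compact (proj_closure_cone (solset :: (complex, 5) vec set) \<inter> sphere 0 1)" by (rule compact_pcc)
qed


end
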